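(* Let $c>2$ be a constant. Consider random directed graphs $\mathcal{G}_{n,p}$ on $n$ vertices in which each ordered pair $(u,v)$ of distinct vertices is an edge independently with probability $p$, where $p \ge \frac{c\log n}{n}$, together with an arbitrary partition $(V_1,V_P)$ of the vertices into player-1 and probabilistic vertices and an arbitrary nonempty target (B\"uchi) set $B$. Then the expected number of iterations of the classical algorithm for almost-sure winning in MDPs with B\"uchi objective $B$ is $O(1)$ (bounded by a constant independent of $n$ and $p$), and the average case running time of the algorithm is linear in the size of the graph.
   Context: $\log$ denotes the natural logarithm. For $U \subseteq V$ in a graph $G$ with vertex partition $(V_1,V_P)$, the random attractor $\mathrm{Attr}_P(U)$ is $\bigcup_{i\ge 0} X_i$, where $X_0=U$ and $X_{i+1}= X_i \cup \{v\in V_P : E(v)\cap X_i \neq\emptyset\} \cup \{v \in V_1 : E(v)\subseteq X_i\}$, with $E(v)$ the set of out-neighbours of $v$. The classical algorithm for B\"uchi objective $B$ works in iterations: starting from $G^1=G$ with vertex set $V^1$, in iteration $i$ it computes the set $Z^i$ of vertices of $G^i$ with a directed path in $G^i$ to a vertex of $B\cap V^i$, sets $U^i=V^i\setminus Z^i$; if $U^i=\emptyset$ it stops and outputs $Z^i$, otherwise it removes $\mathrm{Attr}_P(U^i)$ (computed in $G^i$) from $G^i$ to get $G^{i+1}$. Each iteration takes time linear in the size of the current graph, and there are at most $n$ iterations. *)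

theory Defs
  imports "HOL-Probability.Probability"
begin

text \<open>Graphs: vertex set V :: nat set and edge relation E :: (nat * nat) set.
  Vertex partition: V1 is the set of player-1 vertices, all other vertices are probabilistic (V_P).\<close>

definition out_edges :: "(nat \<times> nat) set \<Rightarrow> nat \<Rightarrow> nat set" where
  "out_edges E v = {w. (v, w) \<in> E}"

definition reach_B :: "nat set \<Rightarrow> (nat \<times> nat) set \<Rightarrow> nat set \<Rightarrow> nat set" where
  "reach_B V E B = {v \<in> V. \<exists>w \<in> B \<inter> V. (v, w) \<in> (E \<inter> (V \<times> V))\<^sup>*}"

definition attr_P :: "nat set \<Rightarrow> (nat \<times> nat) set \<Rightarrow> nat set \<Rightarrow> nat set \<Rightarrow> nat set" where
  "attr_P V E V1 U = lfp (\<lambda>X. U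
      \<union> {v \<in> V. v \<notin> V1 \<and> out_edges (E \<inter> (V \<times> V)) v \<inter> X \<noteq> {}}
      \<union> {v \<in> V. v \<in> V1 \<and> out_edges (E \<inter> (V \<times> V)) v \<subseteq> X})"

definition U_set :: "nat set \<Rightarrow> (nat \<times> nat) set \<Rightarrow> nat set \<Rightarrow> nat set" where
  "U_set V E B = V - reach_B V E B"

definition buchi_step :: "nat set \<Rightarrow> nat set \<Rightarrow> nat set \<times> (nat \<times> nat) set \<Rightarrow> nat set \<times> (nat \<times> nat) set" where
  "buchi_step V1 B G = (let V = fst G; E = snd G; U = U_set V E B in
     if U = {} then G
     else (let V' = V - attr_P V E V1 U in (V', E \<inter> (V' \<times> V'))))"

text \<open>G^(k+1), starting from G^1 = G.\<close>
definition buchi_graph :: "nat set \<Rightarrow> nat set \<Rightarrow> nat set \<Rightarrow> (nat \<times> nat) set \<Rightarrow> nat \<Rightarrow> nat set \<times> (nat \<times> nat) set" where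
  "buchi_graph V1 B V E k = (buchi_step V1 B ^^ k) (V, E)"

text \<open>Number of iterations: the index i of the first iteration with U^i = {}.\<close>
definition buchi_iterations :: "nat set \<Rightarrow> nat set \<Rightarrow> nat set \<Rightarrow> (nat \<times> nat) set \<Rightarrow> nat" where
  "buchi_iterations V1 B V E =
     Suc (LEAST k. U_set (fst (buchi_graph V1 B V E k)) (snd (buchi_graph V1 B V E k)) B = {})"

definition buchi_time :: "nat set \<Rightarrow> nat set \<Rightarrow> nat set \<Rightarrow> (nat \<times> nat) set \<Rightarrow> nat" where
  "buchi_time V1 B V E =
     (\<Sum>k < buchi_iterations V1 B V E.
        card (fst (buchi_graph V1 B V E k)) + card (snd (buchi_graph V1 B V E k)))"

definition offdiag :: "nat \<Rightarrow> (nat \<times> nat) set" where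
  "offdiag n = {(u, v). u < n \<and> v < n \<and> u \<noteq> v}"

definition random_digraph :: "nat \<Rightarrow> real \<Rightarrow> (nat \<times> nat) set pmf" where
  "random_digraph n p =
     map_pmf (\<lambda>f. {e \<in> offdiag n. f e}) (Pi_pmf (offdiag n) False (\<lambda>_. bernoulli_pmf p))"

end

theory Submission
  imports Defs
begin


definition cutset :: "nat \<Rightarrow> nat set \<Rightarrow> (nat \<times> nat) set" where
  "cutset n S = S \<times> ({..<n} - S)"
definition SS :: "nat \<Rightarrow> nat set set" where
  "SS n = {S. S \<subseteq> {..<n} \<and> S \<noteq> {} \<and> S \<noteq> {..<n}}"
definition bad :: "nat \<Rightarrow> (nat\<times>nat) set \<Rightarrow> bool" where
  "bad n E = (\<exists>S\<in>SS n. cutset n S \<inter> E = {})"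

lemma bg_Suc: "buchi_graph V1 B V E (Suc k) = buchi_step V1 B (buchi_graph V1 B V E k)"
  by (simp add: buchi_graph_def)
lemma bg_0: "buchi_graph V1 B V E 0 = (V,E)" by (simp add: buchi_graph_def)

lemma bg_sub: "fst (buchi_graph V1 B V E k) \<subseteq> V \<and> snd (buchi_graph V1 B V E k) \<subseteq> E"
  by (induction k) (auto simp: bg_Suc bg_0 buchi_step_def Let_def)

lemma U_sub_attr: "U \<subseteq> attr_P V E V1 U"
  unfolding attr_P_def by (rule lfp_greatest) auto

lemma step_card:
  assumes "finite (fst G)" "U_set (fst G) (snd G) B \<noteq> {}"
  shows "card (fst (buchi_step V1 B G)) < card (fst G)"
proof -
  let ?U = "U_set (fst G) (snd G) B"
  have sub: "?U \<subseteq> fst G" by (auto simp: U_set_def)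
  have "fst (buchi_step V1 B G) = fst G - attr_P (fst G) (snd G) V1 ?U"
    using assms(2) by (simp add: buchi_step_def Let_def)
  also have "\<dots> \<subset> fst G" using U_sub_attr[of ?U] sub assms(2) by blast
  finally show ?thesis using assms(1) psubset_card_mono by blast
qed

lemma card_decr:
  assumes "finite V" "\<forall>j<k. U_set (fst (buchi_graph V1 B V E j)) (snd (buchi_graph V1 B V E j)) B \<noteq> {}"
  shows "card (fst (buchi_graph V1 B V E k)) + k \<le> card V"
  using assms(2)
proof (induction k)
  case 0 then show ?case by (simp add: bg_0)
next
  case (Suc k)
  have fin: "finite (fst (buchi_graph V1 B V E k))" by (rule finite_subset[OF conjunct1[OF bg_sub] assms(1)])
  have "card (fst (buchi_graph V1 B V E (Suc k))) < card (fst (buchi_graph V1 B V E k))"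
    unfolding bg_Suc by (rule step_card[OF fin]) (use Suc.prems in auto)
  with Suc show ?case by auto
qed

lemma iter_le:
  assumes "finite V"
  shows "buchi_iterations V1 B V E \<le> Suc (card V)"
proof -
  let ?P = "\<lambda>k. U_set (fst (buchi_graph V1 B V E k)) (snd (buchi_graph V1 B V E k)) B = {}"
  have "\<exists>k\<le>card V. ?P k"
  proof (rule ccontr)
    assume "\<not> ?thesis"
    hence a: "\<forall>j<card V. \<not> ?P j" "\<not> ?P (card V)" by auto
    from card_decr[OF assms a(1)] have "card (fst (buchi_graph V1 B V E (card V))) = 0" by simp
    moreover have "finite (fst (buchi_graph V1 B V E (card V)))" by (rule finite_subset[OF conjunct1[OF bg_sub] assms(1)])
    ultimately have "fst (buchi_graph V1 B V E (card V)) = {}" by simp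
    hence "?P (card V)" by (simp add: U_set_def)
    with a(2) show False by simp
  qed
  then obtain k where "k \<le> card V" "?P k" by blast
  hence "(LEAST k. ?P k) \<le> card V" using Least_le[of ?P k] by linarith
  thus ?thesis unfolding buchi_iterations_def by simp
qed

lemma time_le:
  assumes "finite V" "finite E"
  shows "buchi_time V1 B V E \<le> buchi_iterations V1 B V E * (card V + card E)"
proof -
  have "buchi_time V1 B V E \<le> (\<Sum>k < buchi_iterations V1 B V E. card V + card E)"
    unfolding buchi_time_def
    by (intro sum_mono add_mono card_mono) (use assms conjunct1[OF bg_sub] conjunct2[OF bg_sub] in auto)
  thus ?thesis by simp
qed

lemma good:
  assumes "\<not> bad n E" "B \<subseteq> {..<n}" "B \<noteq> {}" 
  shows "U_set {..<n} E B = {}"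
proof -
  let ?V = "{..<n::nat}"
  let ?R = "(E \<inter> ?V \<times> ?V)\<^sup>*"
  have "v \<in> reach_B ?V E B" if v: "v < n" for v
  proof -
    define R where "R = {u \<in> ?V. (v,u) \<in> ?R}"
    have "R = ?V"
    proof (rule ccontr)
      assume "R \<noteq> ?V"
      moreover have "R \<noteq> {}" "R \<subseteq> ?V" using v by (auto simp: R_def)
      ultimately have "R \<in> SS n" by (auto simp: SS_def)
      with assms(1) obtain u w where uw: "u \<in> R" "w \<in> ?V - R" "(u,w) \<in> E" unfolding bad_def cutset_def by blast
      then have "(v,w) \<in> ?R" unfolding R_def by (auto intro: rtrancl_into_rtrancl)
      with uw(2) show False by (auto simp: R_def)
    qed
    obtain b where "b \<in> B" using assms(3) by auto
    with assms(2) \<open>R = ?V\<close> v show ?thesis by (auto simp: reach_B_def R_def)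
  qed
  thus ?thesis by (auto simp: U_set_def)
qed

lemma good_iter:
  assumes "\<not> bad n E" "B \<subseteq> {..<n}" "B \<noteq> {}" 
  shows "buchi_iterations V1 B {..<n} E = 1" "buchi_time V1 B {..<n} E = n + card E"
  using good[OF assms] by (simp_all add: buchi_iterations_def buchi_time_def bg_0)

lemma finite_offdiag: "finite (offdiag n)"
  by (rule finite_subset[of _ "{..<n} \<times> {..<n}"]) (auto simp: offdiag_def)

lemma pointwise:
  assumes "E \<subseteq> offdiag n" "B \<subseteq> {..<n}" "B \<noteq> {}"
  shows "real (buchi_iterations V1 B {..<n} E) \<le> 1 + real n * (if bad n E then 1 else 0)"
    and "real (buchi_time V1 B {..<n} E) \<le> real (n + card E) * (1 + real n * (if bad n E then 1 else 0))"
proof -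
  have fE: "finite E" using assms(1) finite_offdiag finite_subset by blast
  have it: "buchi_iterations V1 B {..<n} E \<le> Suc n" using iter_le[of "{..<n}"] by simp
  have tm: "buchi_time V1 B {..<n} E \<le> buchi_iterations V1 B {..<n} E * (n + card E)"
    using time_le[of "{..<n}" E] fE by simp
  show "real (buchi_iterations V1 B {..<n} E) \<le> 1 + real n * (if bad n E then 1 else 0)"
    using it good_iter[OF _ assms(2,3)] by (cases "bad n E") auto
  show "real (buchi_time V1 B {..<n} E) \<le> real (n + card E) * (1 + real n * (if bad n E then 1 else 0))"
  proof (cases "bad n E")
    case True
    have "buchi_time V1 B {..<n} E \<le> Suc n * (n + card E)"
      using tm it mult_right_mono order_trans by blast
    hence "real (buchi_time V1 B {..<n} E) \<le> real (Suc n * (n + card E))" by linarith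
    thus ?thesis using True by (simp add: algebra_simps)
  next
    case False thus ?thesis using good_iter[OF _ assms(2,3)] by simp
  qed
qed



context
  fixes D :: "(nat\<times>nat) set" and p :: real
  assumes finD: "finite D" and p0: "0 \<le> p" and p1: "p \<le> 1"
begin

abbreviation "MM \<equiv> Pi_pmf D False (\<lambda>_. bernoulli_pmf p)"

lemma finM: "finite (set_pmf MM)"
  using finD by (auto simp: set_Pi_pmf intro!: finite_PiE_dflt)

lemma intM[simp]: "integrable (measure_pmf MM) (f :: _ \<Rightarrow> real)"
  by (rule integrable_measure_pmf_finite[OF finM])

lemma E_prod:
  assumes "\<And>x v. f x v \<ge> (0::real)"
  shows "measure_pmf.expectation MM (\<lambda>y. \<Prod>x\<in>D. f x (y x)) = (\<Prod>x\<in>D. f x True * p + f x False * (1 - p))"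
  by (subst expectation_prod_Pi_pmf) (auto simp: finD p0 p1 assms integrable_measure_pmf_finite)

definition phi :: "(nat\<times>nat) set \<Rightarrow> ((nat\<times>nat) \<Rightarrow> bool) \<Rightarrow> real" where
  "phi K y = (\<Prod>x\<in>D. if x \<in> K then (if y x then 0 else 1) else 1)"

lemma phi_val: "phi K y = (if \<exists>x\<in>D\<inter>K. y x then 0 else 1)"
proof (cases "\<exists>x\<in>D\<inter>K. y x")
  case True
  have "phi K y = 0" unfolding phi_def using finD True by (intro prod_zero) auto
  then show ?thesis using True by simp
next
  case False
  then show ?thesis unfolding phi_def by (intro trans[OF prod.neutral]) auto
qed

lemma phi_nonneg: "0 \<le> phi K y" by (simp add: phi_val)

lemma phi_E:
  assumes "K \<subseteq> D"
  shows "measure_pmf.expectation MM (phi K) = (1-p)^card K"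
proof -
  have "measure_pmf.expectation MM (phi K) = (\<Prod>x\<in>D. if x \<in> K then 1 - p else 1)"
    unfolding phi_def by (subst E_prod) (auto intro!: prod.cong)
  also have "\<dots> = (\<Prod>x\<in>D \<inter> {x. x\<in>K}. 1 - p)"
    using finD by (subst prod.If_cases) auto
  also have "D \<inter> {x. x\<in>K} = K" using assms by auto
  finally show ?thesis by simp
qed

lemma ind_phi_E:
  assumes "e \<in> D"
  shows "measure_pmf.expectation MM (\<lambda>y. (if y e then 1 else 0) * phi K y) \<le> p * measure_pmf.expectation MM (phi K)"
proof -
  define g where "g x v = (if x = e then (if v then 1 else 0) else 1) * (if x\<in>K then (if v then 0 else 1) else (1::real))" for x v
  have rw: "(if y e then 1 else 0) * phi K y = (\<Prod>x\<in>D. g x (y x))" for y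
    unfolding g_def phi_def prod.distrib using finD assms by (simp add: prod.delta)
  have "measure_pmf.expectation MM (\<lambda>y. (if y e then 1 else 0) * phi K y)
      = (\<Prod>x\<in>D. g x True * p + g x False * (1 - p))"
    unfolding rw by (rule E_prod) (auto simp: g_def)
  also have "\<dots> \<le> (\<Prod>x\<in>D. (if x = e then p else 1) * (if x \<in> K then 1 - p else 1))"
    by (intro prod_mono) (use p0 p1 in \<open>auto simp: g_def\<close>)
  also have "\<dots> = p * (\<Prod>x\<in>D. (if x \<in> K then 1 - p else 1))"
    unfolding prod.distrib using finD assms by (simp add: prod.delta)
  also have "(\<Prod>x\<in>D. (if x \<in> K then 1 - p else 1)) = measure_pmf.expectation MM (phi K)"
    unfolding phi_def by (subst E_prod) (auto intro!: prod.cong)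
  finally show ?thesis .
qed

lemma ind_E:
  assumes "e \<in> D"
  shows "measure_pmf.expectation MM (\<lambda>y. if y e then 1 else 0) = p"
proof -
  have rw: "(if y e then 1 else 0) = (\<Prod>x\<in>D. (if x = e then (if y x then 1 else 0) else (1::real)))" for y
    using finD assms by (simp add: prod.delta)
  have "(\<Prod>x\<in>D. (if x = e then (if True then 1 else 0) else (1::real)) * p + (if x = e then (if False then 1 else 0) else 1) * (1 - p))
     = (\<Prod>x\<in>D. if x = e then p else 1)" by (intro prod.cong) auto
  also have "\<dots> = p" using finD assms by (simp add: prod.delta)
  finally show ?thesis unfolding rw by (subst E_prod) auto
qed

lemma card_sum: "real (card {e\<in>D. y e}) = (\<Sum>e\<in>D. if y e then 1 else 0)"
  using finD by (simp add: sum.If_cases Int_def)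

lemma E_card: "measure_pmf.expectation MM (\<lambda>y. real (card {e\<in>D. y e})) = real (card D) * p"
  unfolding card_sum by (subst Bochner_Integration.integral_sum) (auto simp: ind_E)

lemma E_card_phi:
  assumes "K \<subseteq> D"
  shows "measure_pmf.expectation MM (\<lambda>y. real (card {e\<in>D. y e}) * phi K y)
     \<le> real (card D) * p * measure_pmf.expectation MM (phi K)"
proof -
  have "measure_pmf.expectation MM (\<lambda>y. real (card {e\<in>D. y e}) * phi K y)
     = (\<Sum>e\<in>D. measure_pmf.expectation MM (\<lambda>y. (if y e then 1 else 0) * phi K y))"
    unfolding card_sum sum_distrib_right by (subst Bochner_Integration.integral_sum) auto
  also have "\<dots> \<le> (\<Sum>e\<in>D. p * measure_pmf.expectation MM (phi K))"
    by (intro sum_mono ind_phi_E)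
  finally show ?thesis by simp
qed

end



definition Q :: "nat \<Rightarrow> real \<Rightarrow> real" where
  "Q n p = (\<Sum>S\<in>SS n. (1-p)^card (cutset n S))"

lemma finite_SS: "finite (SS n)"
  by (rule finite_subset[of _ "Pow {..<n}"]) (auto simp: SS_def)

lemma cutset_sub: "S \<subseteq> {..<n} \<Longrightarrow> cutset n S \<subseteq> offdiag n"
  by (auto simp: cutset_def offdiag_def)

lemma main_bounds:
  assumes p0: "0 \<le> p" and p1: "p \<le> 1" and B: "B \<subseteq> {..<n}" "B \<noteq> {}"
  shows "measure_pmf.expectation (random_digraph n p) (\<lambda>E. real (buchi_iterations V1 B {..<n} E)) \<le> 1 + n * Q n p"
   and "measure_pmf.expectation (random_digraph n p) (\<lambda>E. real (buchi_time V1 B {..<n} E))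
          \<le> (1 + n * Q n p) * measure_pmf.expectation (random_digraph n p) (\<lambda>E. real (n + card E))"
proof -
  let ?D = "offdiag n"
  let ?M = "Pi_pmf ?D False (\<lambda>_. bernoulli_pmf p)"
  have fD: "finite ?D" by (rule finite_offdiag)
  note intM' = intM[OF fD p0 p1]
  let ?ph = "\<lambda>S. phi ?D (cutset n S)"
  have phn: "0 \<le> ?ph S y" for S y by (rule phi_nonneg[OF fD p0 p1])
  have ind: "(if bad n {e\<in>?D. y e} then 1 else 0) \<le> (\<Sum>S\<in>SS n. ?ph S y)" for y
  proof (cases "bad n {e\<in>?D. y e}")
    case True
    then obtain S where S: "S \<in> SS n" "cutset n S \<inter> {e\<in>?D. y e} = {}" by (auto simp: bad_def)
    have "?ph S y = 1" using S by (auto simp: phi_val[OF fD p0 p1])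
    moreover have "?ph S y \<le> (\<Sum>S\<in>SS n. ?ph S y)"
      by (rule member_le_sum) (auto simp: S finite_SS phn)
    ultimately show ?thesis using True by simp
  next
    case False thus ?thesis by (simp add: sum_nonneg phn)
  qed
  have Eph: "measure_pmf.expectation ?M (?ph S) = (1-p)^card (cutset n S)" if "S \<in> SS n" for S
    using that by (intro phi_E[OF fD p0 p1] cutset_sub) (auto simp: SS_def)
  have EQ: "measure_pmf.expectation ?M (\<lambda>y. \<Sum>S\<in>SS n. ?ph S y) = Q n p"
    by (subst Bochner_Integration.integral_sum) (auto simp: intM' Eph Q_def intro!: sum.cong)
  have Ecard: "measure_pmf.expectation ?M (\<lambda>y. real n + real (card {e\<in>?D. y e})) = real n + card ?D * p"
    using E_card[OF fD p0 p1] by (simp add: intM')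
  have Ecph: "measure_pmf.expectation ?M (\<lambda>y. (real n + real (card {e\<in>?D. y e})) * ?ph S y)
      \<le> (real n + card ?D * p) * (1-p)^card (cutset n S)" if "S \<in> SS n" for S
  proof -
    have sub: "cutset n S \<subseteq> ?D" using that by (intro cutset_sub) (auto simp: SS_def)
    have "measure_pmf.expectation ?M (\<lambda>y. (real n + real (card {e\<in>?D. y e})) * ?ph S y)
       = real n * measure_pmf.expectation ?M (?ph S) + measure_pmf.expectation ?M (\<lambda>y. real (card {e\<in>?D. y e}) * ?ph S y)"
      by (simp add: distrib_right intM')
    also have "\<dots> \<le> real n * measure_pmf.expectation ?M (?ph S) + card ?D * p * measure_pmf.expectation ?M (?ph S)"
      using E_card_phi[OF fD p0 p1 sub] by simp
    finally show ?thesis using Eph[OF that] by (simp add: algebra_simps)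
  qed
  have rd: "measure_pmf.expectation (random_digraph n p) f = measure_pmf.expectation ?M (\<lambda>y. f {e\<in>?D. y e})" for f :: "_ \<Rightarrow> real"
    by (simp add: random_digraph_def)
  show "measure_pmf.expectation (random_digraph n p) (\<lambda>E. real (buchi_iterations V1 B {..<n} E)) \<le> 1 + n * Q n p"
  proof -
    have "measure_pmf.expectation ?M (\<lambda>y. real (buchi_iterations V1 B {..<n} {e\<in>?D. y e}))
        \<le> measure_pmf.expectation ?M (\<lambda>y. 1 + real n * (\<Sum>S\<in>SS n. ?ph S y))"
    proof (rule integral_mono)
      fix y
      have "real (buchi_iterations V1 B {..<n} {e\<in>?D. y e}) \<le> 1 + real n * (if bad n {e\<in>?D. y e} then 1 else 0)"
        by (rule pointwise(1)) (use B in auto)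
      also have "\<dots> \<le> 1 + real n * (\<Sum>S\<in>SS n. ?ph S y)"
        using ind[of y] by (intro add_left_mono mult_left_mono) auto
      finally show "real (buchi_iterations V1 B {..<n} {e\<in>?D. y e}) \<le> 1 + real n * (\<Sum>S\<in>SS n. ?ph S y)" .
    qed (simp_all add: intM')
    also have "\<dots> = 1 + n * Q n p" using EQ by (simp add: intM')
    finally show ?thesis by (simp add: rd)
  qed
  show "measure_pmf.expectation (random_digraph n p) (\<lambda>E. real (buchi_time V1 B {..<n} E))
          \<le> (1 + n * Q n p) * measure_pmf.expectation (random_digraph n p) (\<lambda>E. real (n + card E))"
  proof -
    have "measure_pmf.expectation ?M (\<lambda>y. real (buchi_time V1 B {..<n} {e\<in>?D. y e}))
        \<le> measure_pmf.expectation ?M (\<lambda>y. (real n + real (card {e\<in>?D. y e})) * (1 + real n * (\<Sum>S\<in>SS n. ?ph S y)))"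
    proof (rule integral_mono)
      fix y
      have "real (buchi_time V1 B {..<n} {e\<in>?D. y e}) \<le> real (n + card {e\<in>?D. y e}) * (1 + real n * (if bad n {e\<in>?D. y e} then 1 else 0))"
        by (rule pointwise(2)) (use B in auto)
      also have "\<dots> \<le> real (n + card {e\<in>?D. y e}) * (1 + real n * (\<Sum>S\<in>SS n. ?ph S y))"
        using ind[of y] by (intro add_left_mono mult_left_mono) auto
      finally show "real (buchi_time V1 B {..<n} {e\<in>?D. y e}) \<le> (real n + real (card {e\<in>?D. y e})) * (1 + real n * (\<Sum>S\<in>SS n. ?ph S y))" by simp
    qed (simp_all add: intM')
    also have "\<dots> = measure_pmf.expectation ?M (\<lambda>y. real n + real (card {e\<in>?D. y e}))
        + real n * (\<Sum>S\<in>SS n. measure_pmf.expectation ?M (\<lambda>y. (real n + real (card {e\<in>?D. y e})) * ?ph S y))"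
    proof -
      have "(\<lambda>y. (real n + real (card {e\<in>?D. y e})) * (1 + real n * (\<Sum>S\<in>SS n. ?ph S y)))
          = (\<lambda>y. (real n + real (card {e\<in>?D. y e})) + real n * (\<Sum>S\<in>SS n. (real n + real (card {e\<in>?D. y e})) * ?ph S y))"
        by (simp add: algebra_simps sum_distrib_left)
      thus ?thesis by (simp add: intM' Bochner_Integration.integral_sum)
    qed
    also have "\<dots> \<le> (real n + card ?D * p) + real n * (\<Sum>S\<in>SS n. (real n + card ?D * p) * (1-p)^card (cutset n S))"
      unfolding Ecard by (intro add_left_mono mult_left_mono sum_mono Ecph) auto
    also have "\<dots> = (1 + n * Q n p) * (real n + card ?D * p)"
      by (simp add: Q_def algebra_simps sum_distrib_left)
    finally show ?thesis using Ecard by (simp add: rd)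
  qed
qed



lemma card_cutset: "S \<subseteq> {..<n} \<Longrightarrow> card (cutset n S) = card S * (n - card S)"
  by (simp add: cutset_def card_cartesian_product card_Diff_subset finite_subset)

lemma SS_card: "S \<in> SS n \<Longrightarrow> 1 \<le> card S \<and> card S \<le> n - 1"
proof -
  assume "S \<in> SS n"
  hence S: "S \<subseteq> {..<n}" "S \<noteq> {}" "S \<noteq> {..<n}" by (auto simp: SS_def)
  have fS: "finite S" using S(1) finite_subset by blast
  have "card S < card {..<n}" using S(1,3) by (intro psubset_card_mono) auto
  thus ?thesis using S(2) fS by (auto simp: card_gt_0_iff Suc_le_eq)
qed

lemma Q_eq: "Q n p = (\<Sum>k\<in>{1..n-1}. real (n choose k) * (1-p)^(k*(n-k)))"
proof -
  have "Q n p = (\<Sum>S\<in>SS n. (1-p)^(card S * (n - card S)))"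
    unfolding Q_def by (intro sum.cong) (auto simp: SS_def card_cutset)
  also have "\<dots> = (\<Sum>k\<in>{1..n-1}. \<Sum>S\<in>{S. S \<in> SS n \<and> card S = k}. (1-p)^(card S*(n-card S)))"
    by (rule sum.group[symmetric]) (auto simp: finite_SS dest: SS_card)
  also have "\<dots> = (\<Sum>k\<in>{1..n-1}. real (n choose k) * (1-p)^(k*(n-k)))"
  proof (rule sum.cong[OF refl])
    fix k assume k: "k \<in> {1..n-1}"
    have eq: "{S. S \<in> SS n \<and> card S = k} = {S. S \<subseteq> {..<n} \<and> card S = k}"
      using k by (auto simp: SS_def)
    have "(\<Sum>S\<in>{S. S \<subseteq> {..<n} \<and> card S = k}. (1-p)^(card S*(n-card S)))
        = (\<Sum>S\<in>{S. S \<subseteq> {..<n} \<and> card S = k}. (1-p)^(k*(n-k)))"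
      by (rule sum.cong) auto
    also have "\<dots> = real (n choose k) * (1-p)^(k*(n-k))"
      using n_subsets[of "{..<n}" k] by simp
    finally show "(\<Sum>S\<in>{S. S \<in> SS n \<and> card S = k}. (1-p)^(card S*(n-card S))) = real (n choose k) * (1-p)^(k*(n-k))"
      unfolding eq .
  qed
  finally show ?thesis .
qed

lemma Q_le_pow: assumes "0 \<le> p" "p \<le> 1" shows "Q n p \<le> 2^n"
proof -
  have "Q n p \<le> (\<Sum>S\<in>SS n. 1)"
    unfolding Q_def by (intro sum_mono power_le_one) (use assms in auto)
  also have "\<dots> = real (card (SS n))" by simp
  also have "card (SS n) \<le> card (Pow {..<n::nat})"
    by (intro card_mono) (auto simp: SS_def)
  hence "real (card (SS n)) \<le> 2^n" by (simp add: card_Pow)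
  finally show ?thesis .
qed

lemma key_ineq:
  fixes c n m :: real
  assumes c: "c > 2" and m1: "1 \<le> m" and mn: "2*m \<le> n" and nN: "16*c/(c-2)^2 \<le> n"
  shows "1 + m + (c-2)/4 * m - c*m*(n-m)/n \<le> 0"
proof -
  have n0: "n > 0" using m1 mn by linarith
  have "n + m*n*(1 + (c-2)/4 - c) + c*m^2 \<le> 0"
  proof (cases "4*c*m \<le> (c-2)*n")
    case True
    have "c*m^2 = m*(c*m)" by (simp add: power2_eq_square)
    also have "\<dots> \<le> m*((c-2)*n/4)" using True m1 by (intro mult_left_mono) auto
    finally have "n + m*n*(1 + (c-2)/4 - c) + c*m^2 \<le> n + m*n*(1 + (c-2)/4 - c) + m*((c-2)*n/4)" by simp
    also have "\<dots> = n - m*n - m*n*(c-2)/2" by (simp add: field_simps)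
    also have "\<dots> \<le> 0"
    proof -
      have "n \<le> m*n" using m1 n0 by simp
      moreover have "0 \<le> m*n*(c-2)/2" using m1 n0 c by simp
      ultimately show ?thesis by linarith
    qed
    finally show ?thesis .
  next
    case False
    have c0: "(c-2)^2 > 0" using c by simp
    have "16*c \<le> (c-2)^2 * n" using nN c0 by (simp add: field_simps)
    also have "\<dots> = (c-2)*((c-2)*n)" by (simp add: power2_eq_square)
    also have "\<dots> < (c-2)*(4*c*m)" using False c by (intro mult_strict_left_mono) auto
    finally have "16*c < 4*c*((c-2)*m)" by (simp add: algebra_simps)
    hence mc: "4 < (c-2)*m" using c by (simp add: mult.commute)
    have "c*m^2 = (c*m)*m" by (simp add: power2_eq_square)
    also have "\<dots> \<le> (c*m)*(n/2)" using mn c m1 by (intro mult_left_mono) auto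
    finally have "n + m*n*(1 + (c-2)/4 - c) + c*m^2 \<le> n + m*n*(1 + (c-2)/4 - c) + (c*m)*(n/2)" by simp
    also have "\<dots> = n * (1 - (c-2)*m/4)" by (simp add: algebra_simps)
    also have "\<dots> \<le> 0" using mc n0 by (intro mult_nonneg_nonpos) auto
    finally show ?thesis .
  qed
  hence "(n + m*n*(1 + (c-2)/4 - c) + c*m^2) / n \<le> 0" using n0 by (simp add: divide_nonpos_pos)
  moreover have "(n + m*n*(1 + (c-2)/4 - c) + c*m^2) / n = 1 + m + (c-2)/4 * m - c*m*(n-m)/n"
    using n0 by (simp add: field_simps power2_eq_square)
  ultimately show ?thesis by simp
qed



lemma term_bound:
  fixes c p :: real and n m :: nat
  assumes c: "c > 2" and m1: "1 \<le> m" and mn: "2*m \<le> n" and nN: "16*c/(c-2)^2 \<le> real n"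
     and p: "c * ln (real n) / real n \<le> p" "p \<le> 1"
  shows "real n * real (n choose m) * (1-p)^(m*(n-m)) \<le> exp (-(c-2)/4 * ln (real n)) ^ m"
proof -
  have n2: "real n \<ge> 2" using m1 mn by linarith
  have lnpos: "ln (real n) > 0" using n2 by simp
  have mle: "m \<le> n" using mn by linarith
  have e3: "real n = exp (ln (real n))" using n2 by simp
  have e1: "real (n choose m) \<le> exp (real m * ln (real n))"
  proof -
    have "real (n choose m) \<le> real (n ^ m)" using binomial_le_pow[OF mle] by (simp only: of_nat_le_iff)
    also have "\<dots> = exp (ln (real n)) ^ m" using e3 by simp
    also have "\<dots> = exp (real m * ln (real n))" by (rule exp_of_nat_mult[symmetric])
    finally show ?thesis .
  qed
  have p0: "0 \<le> p"
    using p(1) lnpos c n2 by (smt (verit) divide_nonneg_nonneg mult_nonneg_nonneg)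
  have e2: "(1-p)^(m*(n-m)) \<le> exp (real (m*(n-m)) * (-p))"
  proof -
    have "(1-p)^(m*(n-m)) \<le> exp (-p)^(m*(n-m))"
      using exp_ge_add_one_self[of "-p"] p by (intro power_mono) auto
    also have "\<dots> = exp (real (m*(n-m)) * (-p))" by (rule exp_of_nat_mult[symmetric])
    finally show ?thesis .
  qed
  have rN: "real (m*(n-m)) = real m * (real n - real m)" using mle by (simp add: of_nat_diff)
  have "real n * real (n choose m) * (1-p)^(m*(n-m))
      \<le> exp (ln (real n)) * exp (real m * ln (real n)) * exp (real (m*(n-m)) * (-p))"
    using e1 e2 e3 by (intro mult_mono) (auto simp: p)
  also have "\<dots> = exp (ln (real n) + real m * ln (real n) + real (m*(n-m)) * (-p))"
    by (simp only: exp_add)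
  also have "\<dots> = exp (ln (real n) + real m * ln (real n) - p * (real m * (real n - real m)))"
    unfolding rN by (simp add: algebra_simps)
  also have "\<dots> \<le> exp (real m * (-(c-2)/4 * ln (real n)))"
  proof (subst exp_le_cancel_iff)
    have k: "1 + real m + (c-2)/4 * real m - c*real m*(real n-real m)/real n \<le> 0"
      by (rule key_ineq) (use c m1 mn nN in auto)
    have "c * ln (real n) / real n * (real m * (real n - real m)) \<le> p * (real m * (real n - real m))"
      using p(1) mle by (intro mult_right_mono) auto
    moreover have "c * ln (real n) / real n * (real m * (real n - real m)) = (c*real m*(real n-real m)/real n) * ln (real n)"
      by (simp add: field_simps)
    ultimately have f1: "(c*real m*(real n-real m)/real n) * ln (real n) - p * (real m * (real n - real m)) \<le> 0" by linarith
    have f2: "(1 + real m + (c-2)/4 * real m - c*real m*(real n-real m)/real n) * ln (real n) \<le> 0"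
      using k lnpos by (simp add: mult_nonpos_nonneg)
    have eq: "ln (real n) + real m * ln (real n) - p * (real m * (real n - real m))
       = (1 + real m + (c-2)/4 * real m - c*real m*(real n-real m)/real n) * ln (real n)
         + ((c*real m*(real n-real m)/real n) * ln (real n) - p * (real m * (real n - real m)))
         + real m * (-(c-2)/4 * ln (real n))"
      using n2 by (simp add: field_simps)
    show "ln (real n) + real m * ln (real n) - p * (real m * (real n - real m)) \<le> real m * (-(c-2)/4 * ln (real n))"
      unfolding eq using f1 f2 by linarith
  qed
  also have "\<dots> = exp (-(c-2)/4 * ln (real n)) ^ m" by (rule exp_of_nat_mult)
  finally show ?thesis .
qed


lemma Q_bound:
  fixes c p :: real and n :: nat
  assumes c: "c > 2" and nN: "16*c/(c-2)^2 \<le> real n" and n2: "2 \<le> n"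
     and p: "c * ln (real n) / real n \<le> p" "p \<le> 1"
  shows "real n * Q n p \<le> 2 / (1 - exp (-(c-2)/4 * ln 2))"
proof -
  define r where "r = exp (-(c-2)/4 * ln (real n))"
  define r0 where "r0 = exp (-(c-2)/4 * ln 2)"
  have rpos: "0 < r" by (simp add: r_def)
  have "-(c-2)/4 * ln (real n) \<le> -(c-2)/4 * ln 2"
    by (rule mult_left_mono_neg) (use c n2 in auto)
  hence rr0: "r \<le> r0" unfolding r_def r0_def by simp
  have "-(c-2)/4 * ln 2 < 0" using c by (simp add: mult_neg_pos)
  hence r01: "r0 < 1" unfolding r0_def by simp
  have tb: "real n * (real (n choose k) * (1-p)^(k*(n-k))) \<le> r^k + r^(n-k)" if k: "k \<in> {1..n-1}" for k
  proof (cases "2*k \<le> n")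
    case True
    have "real n * (real (n choose k) * (1-p)^(k*(n-k))) \<le> r^k"
      unfolding r_def using term_bound[of c k n p] True k c nN p by (simp add: mult.assoc)
    moreover have "0 \<le> r^(n-k)" using rpos by simp
    ultimately show ?thesis by linarith
  next
    case False
    define m where "m = n - k"
    have m1: "1 \<le> m" "2*m \<le> n" using k False by (auto simp: m_def)
    have kn: "k \<le> n" using k by auto
    have eq1: "n choose k = n choose m" unfolding m_def by (rule binomial_symmetric[OF kn])
    have eq2: "k*(n-k) = m*(n-m)" unfolding m_def using kn by (simp add: mult.commute)
    have "real n * (real (n choose k) * (1-p)^(k*(n-k))) \<le> r^m"
      unfolding r_def eq1 eq2 using term_bound[of c m n p] m1 c nN p by (simp add: mult.assoc)
    moreover have "0 \<le> r^k" using rpos by simp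
    ultimately show ?thesis unfolding m_def by linarith
  qed
  have S1: "(\<Sum>k\<in>{1..n-1}. r^k) \<le> 1 / (1 - r)"
  proof -
    have "(\<Sum>k\<in>{1..n-1}. r^k) \<le> (\<Sum>k<n. r^k)"
      by (rule sum_mono2) (use rpos in auto)
    also have "\<dots> = (1 - r^n) / (1 - r)" using rr0 r01 by (simp add: sum_gp_strict)
    also have "\<dots> \<le> 1 / (1 - r)" using rr0 r01 rpos by (intro divide_right_mono) auto
    finally show ?thesis .
  qed
  have S2: "(\<Sum>k\<in>{1..n-1}. r^(n-k)) = (\<Sum>k\<in>{1..n-1}. r^k)"
    by (rule sum.reindex_bij_witness[where i="\<lambda>k. n - k" and j="\<lambda>k. n - k"]) auto
  have "real n * Q n p = (\<Sum>k\<in>{1..n-1}. real n * (real (n choose k) * (1-p)^(k*(n-k))))"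
    unfolding Q_eq by (simp add: sum_distrib_left)
  also have "\<dots> \<le> (\<Sum>k\<in>{1..n-1}. r^k + r^(n-k))" by (intro sum_mono tb)
  also have "\<dots> = (\<Sum>k\<in>{1..n-1}. r^k) + (\<Sum>k\<in>{1..n-1}. r^(n-k))" by (rule sum.distrib)
  also have "\<dots> = 2 * (\<Sum>k\<in>{1..n-1}. r^k)" unfolding S2 by (rule mult_2[symmetric])
  also have "\<dots> \<le> 2 / (1 - r)" using S1 by simp
  also have "\<dots> \<le> 2 / (1 - r0)" using rr0 r01 by (intro divide_left_mono) auto
  finally show ?thesis unfolding r0_def .
qed

theorem theorem2:
  fixes c :: real
  assumes "c > 2"
  shows "\<exists>C :: real. \<forall>(n :: nat) (p :: real) (V1 :: nat set) (B :: nat set).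
     c * ln (real n) / real n \<le> p \<and> p \<le> 1 \<and> V1 \<subseteq> {..<n} \<and> B \<subseteq> {..<n} \<and> B \<noteq> {} \<longrightarrow>
       measure_pmf.expectation (random_digraph n p)
          (\<lambda>E. real (buchi_iterations V1 B {..<n} E)) \<le> C
     \<and> measure_pmf.expectation (random_digraph n p)
          (\<lambda>E. real (buchi_time V1 B {..<n} E))
         \<le> C * measure_pmf.expectation (random_digraph n p) (\<lambda>E. real (n + card E))"
proof -
  define N0 :: nat where "N0 = nat \<lceil>16*c/(c-2)^2\<rceil> + 2"
  define K where "K = max (real N0 * 2^N0) (2 / (1 - exp (-(c-2)/4 * ln 2)))"
  show ?thesis
  proof (intro exI[of _ "1 + K"] allI impI)
    fix n p V1 B
    assume H: "c * ln (real n) / real n \<le> p \<and> p \<le> 1 \<and> V1 \<subseteq> {..<n} \<and> B \<subseteq> {..<n} \<and> B \<noteq> {}"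
    have n1: "n \<ge> 1" using H by (cases n) auto
    have "0 \<le> c * ln (real n) / real n" using n1 assms by simp
    hence p0: "0 \<le> p" using H by linarith
    have nQ: "real n * Q n p \<le> K"
    proof (cases "n < N0")
      case True
      have "Q n p \<le> 2^n" using Q_le_pow p0 H by blast
      hence "real n * Q n p \<le> real n * 2^n" by (intro mult_left_mono) auto
      also have "\<dots> \<le> real N0 * 2^N0"
      proof (rule mult_mono)
        show "(2::real)^n \<le> 2^N0" by (rule power_increasing) (use True in auto)
      qed (use True in auto)
      finally show ?thesis unfolding K_def by (rule max.coboundedI1)
    next
      case False
      have "nat \<lceil>16*c/(c-2)^2\<rceil> \<le> n" using False unfolding N0_def by linarith
      hence nN: "16*c/(c-2)^2 \<le> real n" by simp
      have "real n * Q n p \<le> 2 / (1 - exp (-(c-2)/4 * ln 2))"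
        by (rule Q_bound) (use assms nN False H in \<open>auto simp: N0_def\<close>)
      thus ?thesis unfolding K_def by (rule max.coboundedI2)
    qed
    have b1: "measure_pmf.expectation (random_digraph n p) (\<lambda>E. real (buchi_iterations V1 B {..<n} E)) \<le> 1 + n * Q n p"
      by (rule main_bounds(1)) (use H p0 in auto)
    have b2: "measure_pmf.expectation (random_digraph n p) (\<lambda>E. real (buchi_time V1 B {..<n} E))
          \<le> (1 + n * Q n p) * measure_pmf.expectation (random_digraph n p) (\<lambda>E. real (n + card E))"
      by (rule main_bounds(2)) (use H p0 in auto)
    have E0: "0 \<le> measure_pmf.expectation (random_digraph n p) (\<lambda>E. real (n + card E))"
      by (rule Bochner_Integration.integral_nonneg) auto
    have tt: "(1 + n * Q n p) * measure_pmf.expectation (random_digraph n p) (\<lambda>E. real (n + card E))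
        \<le> (1 + K) * measure_pmf.expectation (random_digraph n p) (\<lambda>E. real (n + card E))"
      using nQ E0 by (intro mult_right_mono) auto
    show "measure_pmf.expectation (random_digraph n p) (\<lambda>E. real (buchi_iterations V1 B {..<n} E)) \<le> 1 + K
     \<and> measure_pmf.expectation (random_digraph n p) (\<lambda>E. real (buchi_time V1 B {..<n} E))
         \<le> (1 + K) * measure_pmf.expectation (random_digraph n p) (\<lambda>E. real (n + card E))"
    proof (rule conjI)
      show "measure_pmf.expectation (random_digraph n p) (\<lambda>E. real (buchi_iterations V1 B {..<n} E)) \<le> 1 + K"
        using b1 nQ by linarith
    qed (rule order_trans[OF b2 tt])
  qed
qed


end
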